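(* Let $X$ be a topological space and $x \in X$, and suppose player II has a winning strategy $F$ in the game $\mathsf{G}_1(\Omega_x, \Omega_x)$. Let $\mathcal{P}$ be a family such that each element of $\mathcal{P}$ is a centered family of countable subsets of $X$, and such that for every neighborhood $O_x$ of $x$ there exist $\mathcal{B} \in \mathcal{P}$ and $B \in \mathcal{B}$ with $B \subset O_x$. Then there is a family $(\mathcal{B}_s)_{s \in \omega^{<\omega}}$ of elements of $\mathcal{P}$ such that for every choice of $B_s \in \mathcal{B}_s$ for each $s \in \omega^{<\omega}$, and for every $f \in \omega^\omega$, we have $x \in \overline{\bigcup_{s \subset f} B_s}$ (the union over all finite initial segments $s$ of $f$).
   Context: For a point $x$ of a space $X$, $\Omega_x$ denotes the collection of all sets $A \subset X$ such that $x \notin A$ and $x \in \overline{A}$. The game $\mathsf{G}_1(\Omega_x,\Omega_x)$ is played in innings $n \in \omega$: in inning $n$ player I chooses $A_n \in \Omega_x$ and then player II chooses $a_n \in A_n$; player II wins if $\{a_n : n \in \omega\} \in \Omega_x$. A strategy for player II is a function $F$ assigning to each finite nonempty sequence $(D_0,\dots,D_n)$ of elements of $\Omega_x$ a point $F(D_0,\dots,D_n) \in D_n$; it is winning if II wins every play in which she answers according to $F$. A family $\mathcal{F}$ of sets is centered if $A \cap B \neq \emptyset$ for all $A, B \in \mathcal{F}$. *)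

theory Defs
  imports Main "HOL-Analysis.Analysis"
begin

definition Omega_pt :: "'a::topological_space \<Rightarrow> 'a set set" where
  "Omega_pt x = {A. x \<notin> A \<and> x \<in> closure A}"

definition is_strategy_II :: "'a::topological_space \<Rightarrow> ('a set list \<Rightarrow> 'a) \<Rightarrow> bool" where
  "is_strategy_II x F \<longleftrightarrow>
     (\<forall>ds. ds \<noteq> [] \<and> set ds \<subseteq> Omega_pt x \<longrightarrow> F ds \<in> last ds)"

definition winning_strategy_II :: "'a::topological_space \<Rightarrow> ('a set list \<Rightarrow> 'a) \<Rightarrow> bool" where
  "winning_strategy_II x F \<longleftrightarrow> is_strategy_II x F \<and>
     (\<forall>A :: nat \<Rightarrow> 'a set. (\<forall>n. A n \<in> Omega_pt x) \<longrightarrow>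
        {F (map A [0..<Suc n]) | n. True} \<in> Omega_pt x)"

definition centered :: "'a set set \<Rightarrow> bool" where
  "centered \<F> \<longleftrightarrow> (\<forall>A\<in>\<F>. \<forall>B\<in>\<F>. A \<inter> B \<noteq> {})"

end

theory Submission
  imports Defs
begin

definition Ulem :: "'a::topological_space \<Rightarrow> ('a set list \<Rightarrow> 'a) \<Rightarrow> 'a set list \<Rightarrow> 'a set" where
  "Ulem x F \<sigma> = (if (\<exists>U. open U \<and> x \<in> U \<and> (\<forall>y\<in>U. y \<noteq> x \<longrightarrow> (\<exists>A\<in>Omega_pt x. F (\<sigma> @ [A]) = y)))
     then (SOME U. open U \<and> x \<in> U \<and> (\<forall>y\<in>U. y \<noteq> x \<longrightarrow> (\<exists>A\<in>Omega_pt x. F (\<sigma> @ [A]) = y))) else UNIV)"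

definition rep :: "'a::topological_space \<Rightarrow> ('a set list \<Rightarrow> 'a) \<Rightarrow> 'a set list \<Rightarrow> 'a \<Rightarrow> 'a set" where
  "rep x F \<sigma> y = (SOME A. A \<in> Omega_pt x \<and> F (\<sigma> @ [A]) = y)"

definition pl :: "'a::topological_space \<Rightarrow> ('a set list \<Rightarrow> 'a) \<Rightarrow> 'a list \<Rightarrow> 'a set list" where
  "pl x F ys = foldl (\<lambda>\<sigma> y. \<sigma> @ [rep x F \<sigma> y]) [] ys"

definition Ust :: "'a::topological_space \<Rightarrow> ('a set list \<Rightarrow> 'a) \<Rightarrow> ('a set set \<times> 'a set) list \<Rightarrow> 'a set" where
  "Ust x F L = \<Inter> ((\<lambda>ys. Ulem x F (pl x F ys)) `
     {ys. set ys \<subseteq> {from_nat_into (snd (L!m)) k | m k. m < length L \<and> k < length L} \<and> length ys \<le> length L})"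

definition nxt :: "'a::topological_space \<Rightarrow> ('a set list \<Rightarrow> 'a) \<Rightarrow> 'a set set set \<Rightarrow> ('a set set \<times> 'a set) list \<Rightarrow> 'a set set \<times> 'a set" where
  "nxt x F P L = (SOME p. fst p \<in> P \<and> snd p \<in> fst p \<and> snd p \<subseteq> Ust x F L)"

primrec bs :: "'a::topological_space \<Rightarrow> ('a set list \<Rightarrow> 'a) \<Rightarrow> 'a set set set \<Rightarrow> nat \<Rightarrow> ('a set set \<times> 'a set) list" where
  "bs x F P 0 = []"
| "bs x F P (Suc n) = bs x F P n @ [nxt x F P (bs x F P n)]"

lemma length_bs[simp]: "length (bs x F P n) = n"
  by (induction n) auto

lemma bs_nth: "m < n \<Longrightarrow> bs x F P n ! m = bs x F P (Suc m) ! m"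
proof (induction n)
  case 0 then show ?case by simp
next
  case (Suc n)
  show ?case
  proof (cases "m < n")
    case True then show ?thesis using Suc by (simp add: nth_append)
  next
    case False then have "m = n" using Suc by simp
    then show ?thesis by simp
  qed
qed

lemma pl_snoc: "pl x F (ys @ [y]) = pl x F ys @ [rep x F (pl x F ys) y]"
  by (simp add: pl_def)

lemma Ulem_open: "open (Ulem x F \<sigma>) \<and> x \<in> Ulem x F \<sigma>"
proof (cases "\<exists>U. open U \<and> x \<in> U \<and> (\<forall>y\<in>U. y \<noteq> x \<longrightarrow> (\<exists>A\<in>Omega_pt x. F (\<sigma> @ [A]) = y))")
  case True
  then show ?thesis unfolding Ulem_def using someI_ex[OF True] by auto
next
  case False then show ?thesis unfolding Ulem_def by auto
qed

lemma Ulem_rep: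
  assumes "is_strategy_II x F" "set \<sigma> \<subseteq> Omega_pt x" "y \<in> Ulem x F \<sigma>" "y \<noteq> x"
  shows "rep x F \<sigma> y \<in> Omega_pt x \<and> F (\<sigma> @ [rep x F \<sigma> y]) = y"
proof -
  define N where "N = {y. y \<noteq> x \<and> \<not> (\<exists>A\<in>Omega_pt x. F (\<sigma> @ [A]) = y)}"
  have "x \<notin> closure N"
  proof
    assume "x \<in> closure N"
    then have "N \<in> Omega_pt x" unfolding Omega_pt_def N_def by auto
    moreover have "\<sigma> @ [N] \<noteq> []" by simp
    moreover have "set (\<sigma> @ [N]) \<subseteq> Omega_pt x" using assms(2) \<open>N \<in> Omega_pt x\<close> by simp
    ultimately have "F (\<sigma> @ [N]) \<in> last (\<sigma> @ [N])" using assms(1) unfolding is_strategy_II_def by blast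
    then have "F (\<sigma> @ [N]) \<in> N" by simp
    then show False using \<open>N \<in> Omega_pt x\<close> unfolding N_def by auto
  qed
  then have ex: "\<exists>U. open U \<and> x \<in> U \<and> (\<forall>y\<in>U. y \<noteq> x \<longrightarrow> (\<exists>A\<in>Omega_pt x. F (\<sigma> @ [A]) = y))"
  proof (intro exI[of _ "- closure N"] conjI ballI impI)
    fix y assume "y \<in> - closure N" "y \<noteq> x"
    then have "y \<notin> N" using closure_subset by blast
    then show "\<exists>A\<in>Omega_pt x. F (\<sigma> @ [A]) = y" using \<open>y \<noteq> x\<close> unfolding N_def by blast
  qed (use \<open>x \<notin> closure N\<close> in auto)
  have "\<exists>A\<in>Omega_pt x. F (\<sigma> @ [A]) = y"
    using someI_ex[OF ex] assms(3,4) unfolding Ulem_def if_P[OF ex] by blast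
  then obtain A where A: "A \<in> Omega_pt x" "F (\<sigma> @ [A]) = y" by blast
  show ?thesis unfolding rep_def by (rule someI[of _ A]) (use A in auto)
qed

lemma Ust_open:
  "open (Ust x F L) \<and> x \<in> Ust x F L"
proof -
  let ?E = "{from_nat_into (snd (L!m)) k | m k. m < length L \<and> k < length L}"
  have "?E = (\<lambda>(m,k). from_nat_into (snd (L!m)) k) ` ({..<length L} \<times> {..<length L})" by auto
  then have "finite ?E" by simp
  then have "finite {ys. set ys \<subseteq> ?E \<and> length ys \<le> length L}" by (rule finite_lists_length_le)
  then show ?thesis unfolding Ust_def using Ulem_open by (intro conjI open_Inter) auto
qed


theorem theorem2p2:
  fixes x :: "'a::topological_space"
    and F :: "'a set list \<Rightarrow> 'a"
    and P :: "'a set set set"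
  assumes "winning_strategy_II x F"
    and "\<forall>\<B>\<in>P. centered \<B> \<and> (\<forall>B\<in>\<B>. countable B)"
    and "\<forall>U. open U \<and> x \<in> U \<longrightarrow> (\<exists>\<B>\<in>P. \<exists>B\<in>\<B>. B \<subseteq> U)"
  shows "\<exists>\<B>s :: nat list \<Rightarrow> 'a set set. (\<forall>s. \<B>s s \<in> P) \<and>
           (\<forall>Bs :: nat list \<Rightarrow> 'a set. (\<forall>s. Bs s \<in> \<B>s s) \<longrightarrow>
              (\<forall>f :: nat \<Rightarrow> nat. x \<in> closure (\<Union>n. Bs (map f [0..<n]))))"
proof -
  have strat: "is_strategy_II x F" using assms(1) unfolding winning_strategy_II_def by (rule conjunct1)
  have nxtp: "fst (nxt x F P L) \<in> P \<and> snd (nxt x F P L) \<in> fst (nxt x F P L) \<and> snd (nxt x F P L) \<subseteq> Ust x F L" for L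
  proof -
    obtain BB B where h: "BB \<in> P" "B \<in> BB" "B \<subseteq> Ust x F L" using assms(3)[rule_format, OF Ust_open] by blast
    show ?thesis unfolding nxt_def by (rule someI[where x="(BB, B)"]) (use h in simp)
  qed
  define Bf where "Bf m = fst (bs x F P (Suc m) ! m)" for m
  define B0 where "B0 m = snd (bs x F P (Suc m) ! m)" for m
  have B0p: "Bf m \<in> P" "B0 m \<in> Bf m" "B0 m \<subseteq> Ust x F (bs x F P m)" for m
  proof -
    have e: "bs x F P (Suc m) ! m = nxt x F P (bs x F P m)" by (simp add: nth_append)
    show "Bf m \<in> P" "B0 m \<in> Bf m" "B0 m \<subseteq> Ust x F (bs x F P m)"
      using nxtp[of "bs x F P m"] unfolding Bf_def B0_def e by auto
  qed
  have cnt: "countable (B0 m)" for m using B0p(1,2)[of m] assms(2) by blast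
  show ?thesis
  proof (intro exI[of _ "\<lambda>s. Bf (length s)"] conjI allI impI)
    fix s show "Bf (length s) \<in> P" using B0p by simp
  next
    fix Bs :: "nat list \<Rightarrow> 'a set" and f :: "nat \<Rightarrow> nat"
    assume hBs: "\<forall>s. Bs s \<in> Bf (length s)"
    define C where "C n = Bs (map f [0..<n])" for n
    have CB: "C n \<in> Bf n" for n using hBs[rule_format, of "map f [0..<n]"] unfolding C_def by simp
    show "x \<in> closure (\<Union>n. Bs (map f [0..<n]))"
    proof (rule ccontr)
      assume nx: "x \<notin> closure (\<Union>n. Bs (map f [0..<n]))"
      define W where "W = - closure (\<Union>n. C n)"
      have W: "open W" "x \<in> W" using nx unfolding W_def C_def by auto
      have CW: "C n \<inter> W = {}" for n using closure_subset[of "\<Union>n. C n"] unfolding W_def by blast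
      have "\<forall>n. \<exists>z. z \<in> C n \<inter> B0 n"
      proof
        fix n
        have "centered (Bf n)" using B0p(1)[of n] assms(2) by blast
        then show "\<exists>z. z \<in> C n \<inter> B0 n" using CB[of n] B0p(2)[of n] unfolding centered_def by blast
      qed
      then obtain y where y: "\<And>n. y n \<in> C n \<inter> B0 n" by (rule choice[THEN exE]) blast
      have yW: "y n \<notin> W" "y n \<noteq> x" for n using y[of n] CW[of n] W(2) by blast+
      have "\<forall>n. \<exists>k. from_nat_into (B0 n) k = y n" using from_nat_into_surj[OF cnt] y by blast
      then obtain k where k: "\<And>n. from_nat_into (B0 n) (k n) = y n" by (rule choice[THEN exE]) blast
      define nn where "nn = rec_nat 0 (\<lambda>i a. max a (k a) + 1)"
      have nn0: "nn 0 = 0" and nnS: "nn (Suc i) = max (nn i) (k (nn i)) + 1" for i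
        unfolding nn_def by simp_all
      have nnlt: "\<forall>j<i. nn j < nn i \<and> k (nn j) < nn i" for i
      proof (induction i)
        case 0 then show ?case by simp
      next
        case (Suc i) then show ?case using nnS[of i] by (auto simp: less_Suc_eq)
      qed
      have nnge: "i \<le> nn i" for i by (induction i) (auto simp: nnS)
      define ys where "ys i = map (\<lambda>j. y (nn j)) [0..<i]" for i
      have ysS: "ys (Suc i) = ys i @ [y (nn i)]" for i unfolding ys_def by simp
      have inU: "y (nn i) \<in> Ulem x F (pl x F (ys i))" for i
      proof -
        let ?L = "bs x F P (nn i)"
        have "set (ys i) \<subseteq> {from_nat_into (snd (?L!m)) k | m k. m < length ?L \<and> k < length ?L}"
        proof
          fix z assume "z \<in> set (ys i)"
          then obtain j where j: "j < i" "z = y (nn j)" unfolding ys_def by auto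
          have "snd (?L ! nn j) = B0 (nn j)" using bs_nth[of "nn j" "nn i" x F P] nnlt[of i] j
            unfolding B0_def by simp
          then show "z \<in> {from_nat_into (snd (?L!m)) k | m k. m < length ?L \<and> k < length ?L}"
            using nnlt[of i] j k[of "nn j"] by (intro CollectI exI[of _ "nn j"] exI[of _ "k (nn j)"]) auto
        qed
        moreover have "length (ys i) \<le> length ?L" using nnge unfolding ys_def by simp
        ultimately have mem: "ys i \<in> {ys. set ys \<subseteq> {from_nat_into (snd (?L!m)) k | m k. m < length ?L \<and> k < length ?L} \<and> length ys \<le> length ?L}"
          by simp
        have "Ust x F ?L \<subseteq> Ulem x F (pl x F (ys i))" unfolding Ust_def
          by (rule Inter_lower[OF imageI[OF mem]])
        then show ?thesis using B0p(3)[of "nn i"] y[of "nn i"] by (meson IntD2 subsetD)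
      qed
      define A where "A i = rep x F (pl x F (ys i)) (y (nn i))" for i
      have plA: "pl x F (ys i) = map A [0..<i] \<and> set (pl x F (ys i)) \<subseteq> Omega_pt x" for i
      proof (induction i)
        case 0 then show ?case unfolding ys_def pl_def by simp
      next
        case (Suc i)
        have "A i \<in> Omega_pt x" using Ulem_rep[OF strat conjunct2[OF Suc.IH] inU yW(2)] unfolding A_def by (rule conjunct1)
        then show ?case using Suc.IH unfolding ysS pl_snoc A_def[symmetric] by auto
      qed
      have AO: "A i \<in> Omega_pt x" and FA: "F (map A [0..<Suc i]) = y (nn i)" for i
      proof -
        have r: "rep x F (pl x F (ys i)) (y (nn i)) \<in> Omega_pt x \<and>
             F (pl x F (ys i) @ [rep x F (pl x F (ys i)) (y (nn i))]) = y (nn i)"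
          by (rule Ulem_rep[OF strat conjunct2[OF plA[of i]] inU yW(2)])
        then show "A i \<in> Omega_pt x" unfolding A_def by blast
        show "F (map A [0..<Suc i]) = y (nn i)" using r plA[of i] unfolding A_def[symmetric] by simp
      qed
      have "{F (map A [0..<Suc n]) | n. True} \<in> Omega_pt x"
      proof -
        have wc: "\<forall>A :: nat \<Rightarrow> 'a set. (\<forall>n. A n \<in> Omega_pt x) \<longrightarrow>
          {F (map A [0..<Suc n]) | n. True} \<in> Omega_pt x"
          using assms(1) unfolding winning_strategy_II_def by (rule conjunct2)
        show ?thesis by (rule wc[rule_format]) (rule AO)
      qed
      then have "x \<in> closure {F (map A [0..<Suc n]) | n. True}" unfolding Omega_pt_def by simp
      moreover have "{F (map A [0..<Suc n]) | n. True} \<subseteq> - W" using FA yW(1) by auto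
      moreover have "closed (- W)" using W(1) by (simp add: closed_Compl)
      ultimately have "x \<in> - W" using closure_minimal by blast
      then show False using W(2) by blast
    qed
  qed
qed

end
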